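(* Let $P$ and $Q$ be rhombuses whose vertices all lie on the integer lattice $\mathbb{Z}^2$, and suppose that $P$ and $Q$ form an amicable pair, i.e. the area of $P$ equals the perimeter of $Q$ and the area of $Q$ equals the perimeter of $P$. Then $P$ and $Q$ are both equable, i.e. the area of each equals its own perimeter.
   Context: A polygon is a lattice polygon if all its vertices lie on the integer lattice $\mathbb{Z}^2$. A polygon is equable if its area equals its perimeter. Two polygons form an amicable pair if the area of each equals the perimeter of the other; an equable polygon paired with itself is allowed as an (trivial) amicable pair, and $P$, $Q$ need not be distinct. *)

theory Defs
  imports Complex_Main
begin

type_synonym lattice_point = "int \<times> int"

definition ldist :: "lattice_point \<Rightarrow> lattice_point \<Rightarrow> real" where
  "ldist p q = sqrt (real_of_int ((fst p - fst q)^2 + (snd p - snd q)^2))"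

text \<open>Quadrilateral with vertices A, B, C, D in cyclic order.  It is a rhombus iff its
 four sides have equal length and it is non-degenerate (the diagonals AC and BD are
 non-trivial); these conditions force a genuine rhombus with positive area.\<close>
definition lattice_rhombus :: "lattice_point \<Rightarrow> lattice_point \<Rightarrow> lattice_point \<Rightarrow> lattice_point \<Rightarrow> bool" where
  "lattice_rhombus A B C D \<longleftrightarrow>
     ldist A B = ldist B C \<and> ldist B C = ldist C D \<and> ldist C D = ldist D A \<and>
     A \<noteq> C \<and> B \<noteq> D"

definition quad_perimeter :: "lattice_point \<Rightarrow> lattice_point \<Rightarrow> lattice_point \<Rightarrow> lattice_point \<Rightarrow> real" where
  "quad_perimeter A B C D = ldist A B + ldist B C + ldist C D + ldist D A"

text \<open>Shoelace formula.\<close>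
definition quad_area :: "lattice_point \<Rightarrow> lattice_point \<Rightarrow> lattice_point \<Rightarrow> lattice_point \<Rightarrow> real" where
  "quad_area A B C D = \<bar>real_of_int
      ((fst A * snd B - fst B * snd A) + (fst B * snd C - fst C * snd B)
     + (fst C * snd D - fst D * snd C) + (fst D * snd A - fst A * snd D))\<bar> / 2"

end

theory Submission
  imports Defs
begin


lemma geo:
  fixes b1 b2 c1 c2 d1 d2 :: int
  assumes e1: "b1^2+b2^2 = (b1-c1)^2 + (b2-c2)^2"
    and e2: "(b1-c1)^2+(b2-c2)^2 = (c1-d1)^2+(c2-d2)^2"
    and e3: "(c1-d1)^2+(c2-d2)^2 = d1^2+d2^2"
    and nc: "(c1,c2) \<noteq> (0,0)" and nbd: "(b1,b2) \<noteq> (d1,d2)"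
  shows "c1 = b1+d1 \<and> c2 = b2+d2"
proof -
  define w1 where "w1 = b1 - d1"
  define w2 where "w2 = b2 - d2"
  define y1 where "y1 = b1 + d1"
  define y2 where "y2 = b2 + d2"
  have cc1: "c1*c1+c2*c2 = 2*(b1*c1+b2*c2)" using e1 by (simp add: power2_eq_square algebra_simps)
  have cc2: "c1*c1+c2*c2 = 2*(d1*c1+d2*c2)" using e2 e3 e1 by (simp add: power2_eq_square algebra_simps)
  have bd: "b1*b1+b2*b2 = d1*d1+d2*d2" using e1 e2 e3 by (simp add: power2_eq_square)
  have h1: "w1*c1 + w2*c2 = 0" using cc1 cc2 unfolding w1_def w2_def by (simp add: algebra_simps)
  have h2: "w1*y1 + w2*y2 = 0" using bd unfolding w1_def w2_def y1_def y2_def by (simp add: algebra_simps)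
  have wne: "w1 \<noteq> 0 \<or> w2 \<noteq> 0" using nbd unfolding w1_def w2_def by auto
  have "w1 * (c1*y2 - c2*y1) = y2*(w1*c1 + w2*c2) - c2*(w1*y1+w2*y2)" by (simp add: algebra_simps)
  hence "w1 * (c1*y2 - c2*y1) = 0" using h1 h2 by simp
  moreover have "w2 * (c1*y2 - c2*y1) = c1*(w1*y1+w2*y2) - y1*(w1*c1 + w2*c2)" by (simp add: algebra_simps)
  hence "w2 * (c1*y2 - c2*y1) = 0" using h1 h2 by simp
  ultimately have det: "c1*y2 - c2*y1 = 0" using wne by auto
  have h3: "c1*c1+c2*c2 = c1*y1+c2*y2" using cc1 cc2 unfolding y1_def y2_def by (simp add: algebra_simps)
  have lag: "(c1*c1+c2*c2)*(y1*y1+y2*y2) = (c1*y1+c2*y2)^2 + (c1*y2 - c2*y1)^2"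
    by (simp add: power2_eq_square algebra_simps)
  have pos: "c1*c1+c2*c2 \<noteq> 0"
  proof
    assume "c1*c1+c2*c2 = 0"
    hence "c1 = 0 \<and> c2 = 0" by (metis add_nonneg_eq_0_iff mult_eq_0_iff zero_le_square)
    thus False using nc by auto
  qed
  have "(c1*c1+c2*c2)*(y1*y1+y2*y2) = (c1*c1+c2*c2)*(c1*c1+c2*c2)"
    using lag det h3 by (simp add: power2_eq_square)
  hence yy: "y1*y1+y2*y2 = c1*c1+c2*c2" using pos by (metis mult_left_cancel)
  have "(c1-y1)*(c1-y1) + (c2-y2)*(c2-y2) = 0"
    using yy h3 by (simp add: algebra_simps)
  hence "c1 - y1 = 0 \<and> c2 - y2 = 0" by (metis add_nonneg_eq_0_iff mult_eq_0_iff zero_le_square)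
  thus ?thesis unfolding y1_def y2_def by simp
qed

lemma not_sq:
  fixes y k :: int
  assumes "0 \<le> y" "0 \<le> k" "k^2 < y^2" "y^2 < (k+1)^2"
  shows False
proof -
  have "k < y" using assms power_less_imp_less_base by blast
  moreover have "y < k+1" using assms power_less_imp_less_base by (metis add_nonneg_nonneg zero_le_one)
  ultimately show False by linarith
qed

lemma sqmod3: "((x::int)^2) mod 3 = (if x mod 3 = 0 then 0 else 1)"
proof -
  have "x^2 mod 3 = (x mod 3)^2 mod 3" by (simp add: power_mod)
  moreover have "x mod 3 = 0 \<or> x mod 3 = 1 \<or> x mod 3 = 2" by auto
  ultimately show ?thesis by auto
qed



lemma key_lt:
  fixes p q Y Z :: int
  assumes p0: "0 < p" and pq: "p < q" and eY: "16*q^2 + Y^2 = p^4" and eZ: "16*p^2 + Z^2 = q^4"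
  shows False
proof -
  define P where "P = p^2"
  define Q where "Q = q^2"
  have qq: "P < Q" using p0 pq unfolding P_def Q_def by (simp add: power_strict_mono)
  have P0: "P > 0" using p0 unfolding P_def by simp
  have p4: "p^4 = P*P" unfolding P_def by (simp add: power2_eq_square power4_eq_xxxx)
  have q4: "q^4 = Q*Q" unfolding Q_def by (simp add: power2_eq_square power4_eq_xxxx)
  have eY': "16*Q + Y^2 = P*P" using eY p4 unfolding Q_def by simp
  have eZ': "16*P + Z^2 = Q*Q" using eZ q4 unfolding P_def by simp
  have "16*P < P*P" using eY' qq by (smt (verit) zero_le_power2)
  hence p2: "16 < P" using mult_less_cancel_right_pos[of P 16 P] P0 by simp
  have p5: "p \<ge> 5"
  proof (rule ccontr)
    assume "\<not> p \<ge> 5" hence "p \<le> 4" by simp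
    hence "p*p \<le> 4*4" using p0 by (intro mult_mono) auto
    thus False using p2 unfolding P_def by (simp add: power2_eq_square)
  qed
  have q6: "q \<ge> 6" using p5 pq by simp
  have Q36: "Q \<ge> 36" using q6 mult_mono[of 6 q 6 q] unfolding Q_def by (simp add: power2_eq_square)
  define z where "z = \<bar>Z\<bar>"
  have z0: "z \<ge> 0" and zz: "z^2 = Z^2" unfolding z_def by auto
  have "z^2 < Q^2" using zz eZ' P0 by (simp add: power2_eq_square)
  hence zq: "z < Q" using power_less_imp_less_base Q36 by fastforce
  define j where "j = Q - z"
  have j0: "j > 0" "j \<le> Q" using zq z0 unfolding j_def by auto
  have ej: "16*P = j*(2*Q - j)"
  proof -
    have "z^2 = Q*Q - 2*j*Q + j*j" unfolding j_def by (simp add: power2_eq_square algebra_simps)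
    thus ?thesis using zz eZ' by (simp add: algebra_simps)
  qed
  have j8: "j \<le> 8"
  proof (rule ccontr)
    assume "\<not> j \<le> 8" hence j9: "j \<ge> 9" by simp
    have "(j-9)*(2*Q - j - 9) \<ge> 0" using j9 j0 Q36 by simp
    hence "16*P \<ge> 18*Q - 81" using ej by (simp add: algebra_simps)
    moreover have "p \<le> q - 1" using pq by simp
    hence "p*p \<le> (q-1)*(q-1)" using p0 by (intro mult_mono) auto
    hence "P \<le> Q - 2*q + 1" unfolding P_def Q_def by (simp add: power2_eq_square algebra_simps)
    ultimately show False using q6 Q36 by linarith
  qed
  have jcases: "j = 1 \<or> j = 2 \<or> j = 3 \<or> j = 4 \<or> j = 5 \<or> j = 6 \<or> j = 7 \<or> j = 8" using j0 j8 by auto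
  have jodd: False if "odd j"
  proof -
    have "odd (2*Q - j)" using that by simp
    hence "odd (j*(2*Q-j))" using that by simp
    thus False using ej by (metis even_mult_iff even_numeral)
  qed
  moreover have "j \<noteq> 1" "j \<noteq> 3" "j \<noteq> 5" "j \<noteq> 7" using jodd by auto
  moreover have "j \<noteq> 2"
  proof
    assume "j = 2" hence e: "Q = 4*P + 1" using ej by simp
    have "q \<ge> 2*p+1 \<or> q \<le> 2*p" by auto
    moreover have "q \<ge> 2*p+1 \<Longrightarrow> q*q \<ge> (2*p+1)*(2*p+1)" using p0 by (intro mult_mono) auto
    moreover have "q \<le> 2*p \<Longrightarrow> q*q \<le> (2*p)*(2*p)" using pq p0 by (intro mult_mono) auto
    ultimately show False using e p0 unfolding P_def Q_def by (auto simp: power2_eq_square algebra_simps)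
  qed
  moreover have "j \<noteq> 8"
  proof
    assume "j = 8" hence e: "Q = P + 4" using ej by simp
    have "(p+1)*(p+1) \<le> q*q" using pq p0 by (intro mult_mono) auto
    thus False using e p5 unfolding P_def Q_def by (simp add: power2_eq_square algebra_simps)
  qed
  moreover have "j \<noteq> 6"
  proof
    assume "j = 6" hence e: "4*P + 9 = 3*Q" using ej by simp
    hence "(4*P) mod 3 = 0" by presburger
    hence "P mod 3 = 0" by presburger
    hence "p mod 3 = 0" unfolding P_def using sqmod3[of p] by (auto split: if_splits)
    then obtain a where a: "p = 3*a" by auto
    hence "4*a*a*3 + 3 = Q" using e unfolding P_def by (simp add: power2_eq_square algebra_simps)
    hence "Q mod 3 = 0" by presburger
    hence "q mod 3 = 0" unfolding Q_def using sqmod3[of q] by (auto split: if_splits)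
    then obtain b where b: "q = 3*b" by auto
    hence "4*a*a*3 + 3 = 9*b*b" using \<open>4*a*a*3 + 3 = Q\<close> unfolding Q_def by (simp add: power2_eq_square)
    hence "4*(a^2) + 1 = 3*(b^2)" by (simp add: power2_eq_square)
    hence "(a^2) mod 3 = 2" by presburger
    thus False using sqmod3[of a] by (auto split: if_splits)
  qed
  ultimately have j4: "j = 4" using jcases by blast
  hence QP: "Q = 2*P + 2" using ej by simp
  define y where "y = \<bar>Y\<bar>"
  have y0: "y \<ge> 0" and yy: "y^2 = P*P - 32*P - 32" using eY' QP unfolding y_def by auto
  have A: "y^2 < (P-16)^2" using yy by (simp add: power2_eq_square algebra_simps)
  show False
  proof (cases "p \<ge> 13")
    case True
    hence "p*p \<ge> 13*13" by (intro mult_mono) auto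
    hence "P \<ge> 169" unfolding P_def by (simp add: power2_eq_square)
    hence "(P-17)^2 < y^2" using yy by (simp add: power2_eq_square algebra_simps)
    thus False using not_sq[of y "P-17"] A y0 \<open>P \<ge> 169\<close> by simp
  next
    case False
    hence "p \<in> {5..12}" using p5 by auto
    hence "p = 5 \<or> p = 6 \<or> p = 7 \<or> p = 8 \<or> p = 9 \<or> p = 10 \<or> p = 11 \<or> p = 12" by auto
    thus False
    proof (elim disjE)
      assume "p = 5" hence "y^2 = -207" using yy unfolding P_def by simp
      thus False using zero_le_power2[of y] by linarith
    next
      assume "p = 6" hence "y^2 = 112" using yy unfolding P_def by simp
      thus False using not_sq[of y 10] y0 by simp
    next
      assume "p = 7" hence "y^2 = 801" using yy unfolding P_def by simp
      thus False using not_sq[of y 28] y0 by simp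
    next
      assume "p = 8" hence "y^2 = 2016" using yy unfolding P_def by simp
      thus False using not_sq[of y 44] y0 by simp
    next
      assume "p = 9" hence "y^2 = 3937" using yy unfolding P_def by simp
      thus False using not_sq[of y 62] y0 by simp
    next
      assume "p = 10" hence "y^2 = 6768" using yy unfolding P_def by simp
      thus False using not_sq[of y 82] y0 by simp
    next
      assume "p = 11" hence "y^2 = 10737" using yy unfolding P_def by simp
      thus False using not_sq[of y 103] y0 by simp
    next
      assume "p = 12" hence "y^2 = 16096" using yy unfolding P_def by simp
      thus False using not_sq[of y 126] y0 by simp
    qed
  qed
qed


lemma ldist_eq: "ldist p q = ldist r t \<longleftrightarrow> (fst p - fst q)^2 + (snd p - snd q)^2 = (fst r - fst t)^2 + (snd r - snd t)^2"
  unfolding ldist_def by (simp del: of_int_add of_int_power) 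

lemma rhombus_data:
  assumes "lattice_rhombus A B C D"
  shows "\<exists>s X Y::int. s > 0 \<and> X^2+Y^2 = s^2 \<and> quad_area A B C D = real_of_int \<bar>X\<bar> \<and>
           quad_perimeter A B C D = 4*sqrt(real_of_int s)"
proof -
  obtain a1 a2 where A: "A = (a1,a2)" by (cases A)
  obtain b1' b2' where B: "B = (b1',b2')" by (cases B)
  obtain c1' c2' where C: "C = (c1',c2')" by (cases C)
  obtain d1' d2' where D: "D = (d1',d2')" by (cases D)
  define b1 where "b1 = b1' - a1"
  define b2 where "b2 = b2' - a2"
  define c1 where "c1 = c1' - a1"
  define c2 where "c2 = c2' - a2"
  define d1 where "d1 = d1' - a1"
  define d2 where "d2 = d2' - a2"
  have r: "ldist A B = ldist B C" "ldist B C = ldist C D" "ldist C D = ldist D A" "A \<noteq> C" "B \<noteq> D"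
    using assms unfolding lattice_rhombus_def by auto
  have e1: "b1^2+b2^2 = (b1-c1)^2 + (b2-c2)^2"
    using r(1) unfolding ldist_eq A B C b1_def b2_def c1_def c2_def by (simp add: power2_commute)
  have e2: "(b1-c1)^2+(b2-c2)^2 = (c1-d1)^2+(c2-d2)^2"
    using r(2) unfolding ldist_eq B C D b1_def b2_def c1_def c2_def d1_def d2_def by simp
  have e3: "(c1-d1)^2+(c2-d2)^2 = d1^2+d2^2"
    using r(3) unfolding ldist_eq A C D d1_def d2_def c1_def c2_def by simp
  have nc: "(c1,c2) \<noteq> (0,0)" using r(4) unfolding A C c1_def c2_def by auto
  have nbd: "(b1,b2) \<noteq> (d1,d2)" using r(5) unfolding B D b1_def b2_def d1_def d2_def by auto
  have g: "c1 = b1+d1 \<and> c2 = b2+d2" using geo[OF e1 e2 e3 nc nbd] .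
  define s where "s = b1^2+b2^2"
  have ds: "d1^2+d2^2 = s" using e1 e2 e3 unfolding s_def by simp
  have s0: "s > 0"
  proof -
    have "s \<ge> 0" unfolding s_def by simp
    moreover have "s \<noteq> 0"
    proof
      assume "s = 0"
      hence "b1 = 0 \<and> b2 = 0" unfolding s_def by (simp add: sum_power2_eq_zero_iff)
      hence "d1 = 0 \<and> d2 = 0" using ds \<open>s = 0\<close> by (simp add: sum_power2_eq_zero_iff)
      thus False using nbd \<open>b1 = 0 \<and> b2 = 0\<close> by simp
    qed
    ultimately show ?thesis by simp
  qed
  define X where "X = b1*d2 - b2*d1"
  define Y where "Y = b1*d1 + b2*d2"
  have XY: "X^2 + Y^2 = s^2"
  proof -
    have "X^2 + Y^2 = (b1^2+b2^2)*(d1^2+d2^2)" unfolding X_def Y_def by (simp add: power2_eq_square algebra_simps)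
    thus ?thesis using ds unfolding s_def by (simp add: power2_eq_square)
  qed
  have c1': "c1' = b1' + d1' - a1" and c2': "c2' = b2' + d2' - a2" using g unfolding b1_def b2_def c1_def c2_def d1_def d2_def by auto
  have area: "quad_area A B C D = real_of_int \<bar>X\<bar>"
  proof -
    have "(a1 * b2' - b1' * a2) + (b1' * c2' - c1' * b2') + (c1' * d2' - d1' * c2') + (d1' * a2 - a1 * d2') = 2*X"
      unfolding c1' c2' X_def b1_def b2_def d1_def d2_def by (simp add: algebra_simps)
    thus ?thesis unfolding quad_area_def A B C D by simp
  qed
  have "ldist A B = sqrt (real_of_int s)" unfolding ldist_def A B s_def b1_def b2_def by (simp add: power2_commute)
  hence per: "quad_perimeter A B C D = 4*sqrt(real_of_int s)" using r unfolding quad_perimeter_def by simp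
  show ?thesis using s0 XY area per by blast
qed


lemma sq16: assumes "(x::int)^2 = 16*s" shows "\<exists>q\<ge>0. \<bar>x\<bar> = 4*q \<and> s = q^2"
proof -
  have "even (x^2)" using assms by simp
  hence "even x" by simp
  then obtain y where y: "x = 2*y" by auto
  hence "y^2 = 4*s" using assms by (simp add: power2_eq_square)
  hence "even (y^2)" by simp
  hence "even y" by simp
  then obtain z where z: "y = 2*z" by auto
  hence "s = z^2" using \<open>y^2 = 4*s\<close> by (simp add: power2_eq_square)
  moreover have "\<bar>x\<bar> = 4*\<bar>z\<bar>" using y z by (simp add: abs_mult)
  ultimately show ?thesis by (intro exI[of _ "\<bar>z\<bar>"]) auto
qed

lemma sq_real: assumes "real_of_int \<bar>X\<bar> = 4*sqrt(real_of_int s)" "s > 0" shows "X^2 = 16*s"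
proof -
  have "(real_of_int \<bar>X\<bar>)^2 = 16 * (sqrt (real_of_int s))^2" using assms(1) by (simp add: power_mult_distrib)
  hence "real_of_int (X^2) = real_of_int (16*s)" using assms(2) by simp
  thus ?thesis by (simp only: of_int_eq_iff)
qed

theorem mainTheorem1:
  fixes A B C D E F G H :: lattice_point
  assumes "lattice_rhombus A B C D" and "lattice_rhombus E F G H"
    and "quad_area A B C D = quad_perimeter E F G H"
    and "quad_area E F G H = quad_perimeter A B C D"
  shows "quad_area A B C D = quad_perimeter A B C D \<and> quad_area E F G H = quad_perimeter E F G H"
proof -
  obtain sP XP YP :: int where P: "sP > 0" "XP^2+YP^2 = sP^2" "quad_area A B C D = real_of_int \<bar>XP\<bar>"
           "quad_perimeter A B C D = 4*sqrt(real_of_int sP)" using rhombus_data[OF assms(1)] by blast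
  obtain sQ XQ YQ :: int where Q: "sQ > 0" "XQ^2+YQ^2 = sQ^2" "quad_area E F G H = real_of_int \<bar>XQ\<bar>"
           "quad_perimeter E F G H = 4*sqrt(real_of_int sQ)" using rhombus_data[OF assms(2)] by blast
  have x1: "XP^2 = 16*sQ" using sq_real[of XP sQ] assms(3) P Q by simp
  have x2: "XQ^2 = 16*sP" using sq_real[of XQ sP] assms(4) P Q by simp
  obtain q where q: "q \<ge> 0" "\<bar>XP\<bar> = 4*q" "sQ = q^2" using sq16[OF x1] by blast
  obtain p where p: "p \<ge> 0" "\<bar>XQ\<bar> = 4*p" "sP = p^2" using sq16[OF x2] by blast
  have p0: "p > 0" using p P(1) by (cases "p = 0") auto
  have q0: "q > 0" using q Q(1) by (cases "q = 0") auto
  have XP2: "XP^2 = (4*q)^2" using q(2) by (metis power2_abs)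
  have XQ2: "XQ^2 = (4*p)^2" using p(2) by (metis power2_abs)
  have eY: "16*q^2 + YP^2 = p^4" using P(2) XP2 p(3) by (simp add: power_mult_distrib power_mult[symmetric])
  have eZ: "16*p^2 + YQ^2 = q^4" using Q(2) XQ2 q(3) by (simp add: power_mult_distrib power_mult[symmetric])
  have "p = q"
  proof (rule ccontr)
    assume "p \<noteq> q"
    hence "p < q \<or> q < p" by auto
    thus False
    proof
      assume "p < q" thus False using key_lt[OF p0 _ eY eZ] by blast
    next
      assume "q < p" thus False using key_lt[OF q0 _ eZ eY] by blast
    qed
  qed
  hence "sP = sQ" using p q by simp
  thus ?thesis using P Q assms(3,4) by simp
qed

end
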